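(* Let $V$ be a vector space (of arbitrary dimension) over a field $K$, let $R=\mathrm{End}_K(V)$, and let $a\in R$. Then there exists an idempotent $e\in aRa$ such that $(a(1-e))^2=0$.
   Context: Elements of $\mathrm{End}_K(V)$ act on the left of $V$, and the ring multiplication is composition. *)

theory Defs
  imports Complex_Main
begin

text \<open>The endomorphism ring End_K(V) of a vector space given by the scalar
multiplication scale: the K-linear maps V to V, multiplication = composition.\<close>
definition End_ring :: "('k::field \<Rightarrow> 'v::ab_group_add \<Rightarrow> 'v) \<Rightarrow> ('v \<Rightarrow> 'v) set" where
  "End_ring scale = {f. Vector_Spaces.linear scale scale f}"

end

theory Submission
  imports Defs
begin

lemma key:
  fixes scale :: "'k::field \<Rightarrow> 'v::ab_group_add \<Rightarrow> 'v" and a :: "'v \<Rightarrow> 'v"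
  assumes vs: "vector_space scale"
    and la: "Vector_Spaces.linear scale scale a"
  shows "\<exists>e. e \<in> (\<lambda>r. a \<circ> r \<circ> a) ` End_ring scale \<and> e \<circ> e = e \<and>
    (\<lambda>x. a (x - e x)) \<circ> (\<lambda>x. a (x - e x)) = (\<lambda>x. 0)"
proof -
  interpret V: vector_space scale by fact
  interpret P: vector_space_pair scale scale by unfold_locales
  interpret A: Vector_Spaces.linear scale scale a by fact
  define K where "K = range a \<inter> {x. a x = 0}"
  have subR: "V.subspace (range a)" by (rule A.subspace_image) (rule V.subspace_UNIV)
  have subK: "V.subspace K" unfolding K_def
    using subR A.subspace_kernel by (rule V.subspace_inter)
  obtain B0 where B0: "B0 \<subseteq> K" "V.independent B0" "K \<subseteq> V.span B0"
    by (rule V.maximal_independent_subset)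
  obtain B1 where B1: "B0 \<subseteq> B1" "B1 \<subseteq> range a" "V.independent B1" "range a \<subseteq> V.span B1"
    using B0 K_def by (metis V.maximal_independent_subset_extend inf.boundedE)
  define S where "S = V.span (B1 - B0)"
  have subS: "V.subspace S" unfolding S_def by simp
  have SR: "S \<subseteq> range a" unfolding S_def using B1(2) subR
    by (meson Diff_subset V.span_minimal subset_trans)
  have spB0K: "V.span B0 \<subseteq> K" using B0(1) subK by (rule V.span_minimal)
  define f where "f = P.construct B1 (\<lambda>b. if b \<in> B0 then b else 0)"
  have lf: "Vector_Spaces.linear scale scale f" unfolding f_def
    using B1(3) by (rule P.linear_construct)
  have lid: "Vector_Spaces.linear scale scale (\<lambda>x. x)"
    by (simp add: V.linear_id[unfolded id_def])
  have lz: "Vector_Spaces.linear scale scale (\<lambda>x. 0::'v)"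
    by (rule P.linear_zero)
  have disj: "x = 0" if "x \<in> V.span B0" "x \<in> S" for x
  proof -
    have "f x = x"
      by (rule P.linear_eq_on[OF lf lid that(1)])
         (use B1 in \<open>auto simp: f_def P.construct_basis\<close>)
    moreover have "f x = 0"
      by (rule P.linear_eq_on[OF lf lz that(2)[unfolded S_def]])
         (use B1 in \<open>auto simp: f_def P.construct_basis\<close>)
    ultimately show ?thesis by simp
  qed
  have injS: "inj_on a S"
    unfolding A.inj_on_iff_eq_0[OF subS]
  proof (intro ballI impI)
    fix x assume "x \<in> S" "a x = 0"
    then have "x \<in> K" using SR K_def by auto
    then have "x \<in> V.span B0" using B0 by auto
    then show "x = 0" using disj \<open>x \<in> S\<close> by auto
  qed
  have decomp: "\<exists>s\<in>S. a z = a s" if "z \<in> range a" for z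
  proof -
    have "z \<in> V.span (B0 \<union> (B1 - B0))" using that B1 by (metis Un_Diff_cancel subsetD sup.absorb2)
    then obtain k s where ks: "z = k + s" "k \<in> V.span B0" "s \<in> S"
      unfolding V.span_Un S_def by auto
    then have "a k = 0" using spB0K K_def by auto
    then show ?thesis using ks by (auto simp: A.add)
  qed
  obtain h where h: "h ` UNIV \<subseteq> S" "Vector_Spaces.linear scale scale h" "\<forall>v\<in>S. h (a v) = v"
    using P.linear_exists_left_inverse_on[OF la subS injS] by blast
  obtain g where g: "g ` UNIV \<subseteq> UNIV" "Vector_Spaces.linear scale scale g"
      "\<forall>v\<in>a ` UNIV. a (g v) = v"
    using P.linear_exists_right_inverse_on[OF la V.subspace_UNIV] by blast
  define e where "e = h \<circ> a"
  have lgh: "Vector_Spaces.linear scale scale (g \<circ> h)"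
    using h(2) g(2) by (rule Vector_Spaces.linear_compose)
  have e1: "e = a \<circ> (g \<circ> h) \<circ> a"
  proof
    fix x
    have "h (a x) \<in> range a" using h(1) SR by auto
    then show "e x = (a \<circ> (g \<circ> h) \<circ> a) x" using g(3) by (auto simp: e_def)
  qed
  have e2: "e \<circ> e = e"
  proof
    fix x
    have "h (a x) \<in> S" using h(1) by auto
    then show "(e \<circ> e) x = e x" using h(3) by (simp add: e_def)
  qed
  have e3: "a (z - e z) = 0" if zr: "z \<in> range a" for z
  proof -
    obtain s where s: "s \<in> S" "a z = a s" using decomp[OF zr] by blast
    then have "e z = s" using h(3) by (simp add: e_def)
    then show ?thesis using s by (simp add: A.diff)
  qed
  show ?thesis
  proof (intro exI conjI)
    show "e \<in> (\<lambda>r. a \<circ> r \<circ> a) ` End_ring scale"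
      using e1 lgh by (auto simp: End_ring_def)
    show "e \<circ> e = e" by (rule e2)
    show "(\<lambda>x. a (x - e x)) \<circ> (\<lambda>x. a (x - e x)) = (\<lambda>x. 0)"
      using e3 by auto
  qed
qed

theorem lemma2p9:
  fixes scale :: "'k::field \<Rightarrow> 'v::ab_group_add \<Rightarrow> 'v" and a :: "'v \<Rightarrow> 'v"
  assumes "vector_space scale"
    and "a \<in> End_ring scale"
  shows "\<exists>e. e \<in> (\<lambda>r. a \<circ> r \<circ> a) ` End_ring scale \<and> e \<circ> e = e \<and>
    (\<lambda>x. a (x - e x)) \<circ> (\<lambda>x. a (x - e x)) = (\<lambda>x. 0)"
  using key[OF assms(1)] assms(2) by (simp add: End_ring_def)

end
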